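(* Let $\beta\in[0,1)$ and let $\xi$ be a random variable with values in $[0,\infty)$. Write $\lfloor x\rfloor_+:=\max\{\lfloor x\rfloor,1\}$. (a) If $\lim_{n\to\infty}n\log n\cdot\mathbb{P}\big(\lceil\xi^{1/(1-\beta)}\rceil=n\big)=0$, then $$\lim_{n\to\infty}\mathbb{E}\Big[\frac{n^\beta\xi\,\mathbf 1\{n-n^\beta\xi\ge1\}}{\lfloor n-n^\beta\xi\rfloor_+}\Big]=0.$$ (b) If $\mathbb{E}[\log_+\xi]<\infty$ (where $\log_+x=\max\{\log x,0\}$), then $$\sum_{n=1}^\infty\frac1n\,\mathbb{E}\Big[\frac{n^\beta\xi\,\mathbf 1\{n-n^\beta\xi\ge1\}}{\lfloor n-n^\beta\xi\rfloor_+}\Big]<\infty.$$ *)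

theory Defs
  imports "HOL-Probability.Probability"
begin

definition floor_plus :: "real \<Rightarrow> int" where
  "floor_plus x = max \<lfloor>x\<rfloor> 1"

text \<open>Positive part of the logarithm, log_+ x = max (log x) 0 (with log 0 = -infinity).\<close>
definition log_plus :: "real \<Rightarrow> real" where
  "log_plus x = (if x \<le> 1 then 0 else ln x)"

definition kernel :: "real \<Rightarrow> nat \<Rightarrow> real \<Rightarrow> real" where
  "kernel \<beta> n x =
     (real n powr \<beta> * x * (if real n - real n powr \<beta> * x \<ge> 1 then 1 else 0))
     / real_of_int (floor_plus (real n - real n powr \<beta> * x))"

end

theory Submission
  imports Defs
begin



lemma floor_plus_ge:
  assumes "1 \<le> t" shows "real_of_int (floor_plus t) \<ge> 1" "real_of_int (floor_plus t) \<ge> t/2"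
proof -
  have a: "real_of_int \<lfloor>t\<rfloor> > t - 1" by linarith
  have b: "\<lfloor>t\<rfloor> \<ge> 1" using assms by linarith
  have b': "real_of_int \<lfloor>t\<rfloor> \<ge> 1" using b by simp
  show "real_of_int (floor_plus t) \<ge> 1" unfolding floor_plus_def by simp
  show "real_of_int (floor_plus t) \<ge> t/2" proof -
    have "floor_plus t = \<lfloor>t\<rfloor>" using b by (simp add: floor_plus_def)
    then show ?thesis using a b' by (simp del: floor_le_iff; linarith)
  qed
qed

lemma kernel_nonneg: "0 \<le> x \<Longrightarrow> 0 \<le> kernel \<beta> n x"
  unfolding kernel_def using floor_plus_ge[of "real n - real n powr \<beta> * x"]
  by (auto intro!: divide_nonneg_pos)

lemma kernel_zero: "\<not> 1 \<le> real n - real n powr \<beta> * x \<Longrightarrow> kernel \<beta> n x = 0"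
  unfolding kernel_def by simp

lemma kernel_le:
  assumes "0 \<le> x" "1 \<le> real n - real n powr \<beta> * x"
  shows "kernel \<beta> n x \<le> 2 * (real n powr \<beta> * x) / (real n - real n powr \<beta> * x)"
    "kernel \<beta> n x \<le> real n powr \<beta> * x"
proof -
  let ?y = "real n powr \<beta> * x" let ?t = "real n - real n powr \<beta> * x"
  have y: "0 \<le> ?y" using assms by simp
  have f1: "real_of_int (floor_plus ?t) \<ge> 1" and f2: "real_of_int (floor_plus ?t) \<ge> ?t/2"
    using floor_plus_ge[OF assms(2)] by auto
  have k: "kernel \<beta> n x = ?y / real_of_int (floor_plus ?t)" unfolding kernel_def using assms by simp
  have "?y / real_of_int (floor_plus ?t) \<le> ?y / (?t/2)"
    using f2 y assms(2) by (intro divide_left_mono) auto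
  then show "kernel \<beta> n x \<le> 2 * ?y / ?t" using k by (simp add: algebra_simps)
  have "?y / real_of_int (floor_plus ?t) \<le> ?y / 1"
    using f1 y by (intro divide_left_mono) auto
  then show "kernel \<beta> n x \<le> ?y" using k by simp
qed

lemma kernel_meas: "(\<lambda>x. kernel \<beta> n x) \<in> borel_measurable borel"
  unfolding kernel_def floor_plus_def by measurable



lemma conc_bern:
  fixes s c :: real assumes "0 \<le> s" "0 < c" "c \<le> 1"
  shows "s powr c \<le> 1 + c * (s - 1)"
proof (cases "s = 0")
  case True then show ?thesis using assms by simp
next
  case False
  then have "s powr c * 1 powr (1 - c) \<le> c * s + (1 - c) * 1"
    using assms by (intro Youngs_inequality_0) auto
  then show ?thesis by (simp add: algebra_simps)
qed

lemma ln_diff_ge: fixes a :: real assumes "0 < a" shows "1 / (1 + a) \<le> ln (1 + a) - ln a"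
proof -
  have "ln (a / (1 + a)) \<le> a / (1 + a) - 1" using assms by (intro ln_le_minus_one) auto
  also have "a / (1 + a) - 1 = - (1 / (1 + a))" using assms by (simp add: field_simps)
  finally show ?thesis using assms by (simp add: ln_div)
qed

lemma neg_bern:
  fixes n c :: real assumes "1 < n" "0 < c"
  shows "c * n powr (-c-1) \<le> (n - 1) powr (-c) - n powr (-c)"
proof -
  have l: "ln (n - 1) - ln n \<le> - 1 / n"
  proof -
    have "ln ((n-1)/n) \<le> (n-1)/n - 1" using assms by (intro ln_le_minus_one) auto
    also have "(n-1)/n - 1 = -1/n" using assms by (simp add: field_simps)
    finally show ?thesis using assms by (simp add: ln_div)
  qed
  have "(n - 1) powr (-c) = n powr (-c) * exp (-c * (ln (n-1) - ln n))"
    using assms by (simp add: powr_def exp_add[symmetric] algebra_simps)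
  also have "exp (-c * (ln (n-1) - ln n)) \<ge> 1 + c / n"
  proof -
    have "c * (1/n) \<le> c * (ln n - ln (n-1))" using l assms by (intro mult_left_mono) auto
    then have "-c * (ln (n-1) - ln n) \<ge> c / n" by (simp add: algebra_simps)
    then show ?thesis using exp_ge_add_one_self[of "-c * (ln (n-1) - ln n)"] by linarith
  qed
  then have "n powr (-c) * exp (-c * (ln (n-1) - ln n)) \<ge> n powr (-c) * (1 + c / n)"
    by (intro mult_left_mono) auto
  moreover have "n powr (-c) * (1 + c / n) = n powr (-c) + c * n powr (-c-1)"
    using assms by (simp add: powr_diff field_simps powr_minus)
  ultimately show ?thesis by linarith
qed

lemma harm_bound: "1 \<le> n \<Longrightarrow> (\<Sum>j<n. 1 / (real j + 1)) \<le> 1 + ln (real n)"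
proof (induction n rule: dec_induct)
  case base then show ?case by simp
next
  case (step n)
  have "1 / (1 + real n) \<le> ln (1 + real n) - ln (real n)" using step by (intro ln_diff_ge) auto
  then show ?case using step by (simp add: add.commute)
qed



lemma npow_split: fixes n \<beta> :: real assumes "0 < n" shows "n / n powr (1 - \<beta>) = n powr \<beta>"
  "n / n powr \<beta> = n powr (1 - \<beta>)"
  using assms by (simp_all add: powr_diff)

lemma N_powr: fixes x c :: real assumes "0 \<le> x" "0 < c" shows "(x powr (1/c)) powr c = x"
  using assms by (cases "x = 0") (simp_all add: powr_powr)

lemma y_eq:
  fixes n x \<beta> :: real assumes "0 < n" "0 \<le> x" "\<beta> < 1"
  shows "n powr \<beta> * x = n * ((x powr (1/(1-\<beta>))) / n) powr (1-\<beta>)"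
proof -
  have h: "((x powr (1/(1-\<beta>))) / n) powr (1-\<beta>) = x / n powr (1 - \<beta>)"
    using assms by (simp add: powr_divide N_powr)
  have "n * (x / n powr (1 - \<beta>)) = (n / n powr (1 - \<beta>)) * x" by simp
  also have "\<dots> = n powr \<beta> * x" using npow_split(1)[OF assms(1), of \<beta>] by simp
  finally show ?thesis using h by simp
qed

lemma key_bound:
  fixes n x \<beta> :: real assumes "0 < n" "0 \<le> x" "0 \<le> \<beta>" "\<beta> < 1"
  shows "n powr \<beta> * x \<le> n - (1-\<beta>) * (n - x powr (1/(1-\<beta>)))"
proof -
  let ?N = "x powr (1/(1-\<beta>))"
  have "(?N / n) powr (1-\<beta>) \<le> 1 + (1-\<beta>) * (?N/n - 1)"
    using assms by (intro conc_bern) auto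
  then have "n * (?N / n) powr (1-\<beta>) \<le> n * (1 + (1-\<beta>) * (?N/n - 1))"
    using assms by (intro mult_left_mono) auto
  also have "\<dots> = n - (1-\<beta>) * (n - ?N)" using assms by (simp add: field_simps)
  finally show ?thesis using y_eq[OF assms(1,2,4)] by simp
qed

lemma lt_N:
  fixes n x \<beta> :: real assumes "0 < n" "0 \<le> x" "0 \<le> \<beta>" "\<beta> < 1" "n powr \<beta> * x < n"
  shows "x powr (1/(1-\<beta>)) < n"
proof (rule ccontr)
  let ?N = "x powr (1/(1-\<beta>))"
  assume "\<not> ?N < n"
  then have "1 \<le> ?N / n" using assms by simp
  then have "1 \<le> (?N / n) powr (1-\<beta>)" using assms by (intro ge_one_powr_ge_zero) auto
  then have "n \<le> n * (?N / n) powr (1-\<beta>)" using assms by simp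
  then show False using y_eq[OF assms(1,2,4)] assms(5) by simp
qed

lemma gt_half:
  fixes n x \<beta> :: real assumes "0 < n" "0 \<le> x" "0 \<le> \<beta>" "\<beta> < 1" "n powr \<beta> * x > n / 2"
  shows "n < 2 powr (1/(1-\<beta>)) * x powr (1/(1-\<beta>))"
proof (rule ccontr)
  let ?N = "x powr (1/(1-\<beta>))"
  assume "\<not> ?thesis"
  then have "?N / n \<le> 1 / 2 powr (1/(1-\<beta>))" using assms
    by (simp add: field_simps)
  also have "1 / 2 powr (1/(1-\<beta>)) = (1/2) powr (1/(1-\<beta>))" by (simp add: powr_divide)
  finally have "(?N / n) powr (1-\<beta>) \<le> ((1/2) powr (1/(1-\<beta>))) powr (1-\<beta>)"
    using assms by (intro powr_mono2) auto
  also have "\<dots> = 1/2" using assms by (intro N_powr) auto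
  finally have "n * (?N / n) powr (1-\<beta>) \<le> n / 2" using assms
    by (simp add: field_simps)
  then show False using y_eq[OF assms(1,2,4)] assms(5) by simp
qed

lemma le_half:
  fixes n x \<beta> :: real assumes "0 < n" "0 \<le> x" "n powr \<beta> * x \<le> n / 2"
  shows "2 * x \<le> n powr (1-\<beta>)"
proof -
  have p: "n powr \<beta> > 0" using assms by simp
  have "x \<le> (n/2) / n powr \<beta>" using assms p by (simp add: field_simps)
  also have "\<dots> = n powr (1-\<beta>) / 2" using npow_split(2)[OF assms(1), of \<beta>] by simp
  finally show ?thesis by simp
qed




lemma kernel_le_n: assumes "0 \<le> x" shows "kernel \<beta> n x \<le> real n"
proof (cases "1 \<le> real n - real n powr \<beta> * x")
  case True then show ?thesis using kernel_le(2)[OF assms True] by linarith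
next
  case False then show ?thesis by (simp add: kernel_zero)
qed

lemma partb_term:
  fixes x \<beta> :: real and k :: nat
  assumes x: "0 \<le> x" and b: "0 \<le> \<beta>" "\<beta> < 1"
  defines "c \<equiv> 1 - \<beta>"
  defines "N \<equiv> x powr (1/(1-\<beta>))"
  defines "L \<equiv> 2 powr (1/(1-\<beta>)) * x powr (1/(1-\<beta>))"
  defines "\<psi> \<equiv> (\<lambda>m::nat. if m = 0 then 4/c else 4/c * min 1 (x * real m powr (-c)))"
  defines "\<Phi> \<equiv> (\<lambda>m::nat. ln (1 + max 0 (min (real m) L - N)) + (if real m > N then 1 else 0))"
  shows "kernel \<beta> (Suc k) x / real (Suc k) \<le> (\<psi> k - \<psi> (Suc k)) + 8/c * (\<Phi> (Suc k) - \<Phi> k)"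
proof -
  have c: "0 < c" "c \<le> 1" using b unfolding c_def by auto
  have N0: "0 \<le> N" unfolding N_def by simp
  have psimono: "\<psi> (Suc m) \<le> \<psi> m" for m
  proof (cases m)
    case 0
    have "4 * min 1 (x * real (Suc m) powr (-c)) / c \<le> 4 / c" using c
      by (intro divide_right_mono) auto
    then show ?thesis using c 0 unfolding \<psi>_def by simp
  next
    case (Suc m')
    have "real (Suc m) powr (-c) \<le> real m powr (-c)" using c Suc by (intro powr_mono2') auto
    then have "x * real (Suc m) powr (-c) \<le> x * real m powr (-c)" using x by (intro mult_left_mono) auto
    then have "min 1 (x * real (Suc m) powr (-c)) \<le> min 1 (x * real m powr (-c))" by simp
    then have "4/c * min 1 (x * real (Suc m) powr (-c)) \<le> 4/c * min 1 (x * real m powr (-c))"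
      using c by (intro mult_left_mono) auto
    then show ?thesis using Suc unfolding \<psi>_def by simp
  qed
  have Phimono: "\<Phi> m \<le> \<Phi> (Suc m)" for m
  proof -
    have "min (real m) L \<le> min (real (Suc m)) L" by auto
    then have "ln (1 + max 0 (min (real m) L - N)) \<le> ln (1 + max 0 (min (real (Suc m)) L - N))"
      by (intro ln_mono) auto
    then show ?thesis unfolding \<Phi>_def by auto
  qed
  have Phi0: "\<Phi> m \<ge> 0" for m unfolding \<Phi>_def by auto
  have rhs0: "0 \<le> (\<psi> k - \<psi> (Suc k)) + 8/c * (\<Phi> (Suc k) - \<Phi> k)"
    using psimono[of k] Phimono[of k] c by auto
  define n where "n = real (Suc k)"
  have n0: "0 < n" "1 \<le> n" unfolding n_def by auto
  define y where "y = n powr \<beta> * x"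
  have y0: "0 \<le> y" unfolding y_def using x by simp
  have Pd: "0 \<le> 8/c * (\<Phi> (Suc k) - \<Phi> k)" using Phimono[of k] c by simp
  have Qd: "0 \<le> \<psi> k - \<psi> (Suc k)" using psimono[of k] by simp
  have nS: "real (Suc k) = n" unfolding n_def by simp
  have "kernel \<beta> (Suc k) x / n \<le> (\<psi> k - \<psi> (Suc k)) + 8/c * (\<Phi> (Suc k) - \<Phi> k)"
  proof (cases "1 \<le> n - y")
    case False
    then have "kernel \<beta> (Suc k) x = 0" unfolding n_def y_def by (intro kernel_zero) simp
    then show ?thesis using rhs0 by simp
  next
    case t1: True
    have kl: "kernel \<beta> (Suc k) x \<le> 2 * y / (n - y)" "kernel \<beta> (Suc k) x \<le> y"
      using kernel_le[OF x, of "Suc k" \<beta>] t1 unfolding n_def y_def by auto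
    have Nn: "N < n" unfolding N_def using lt_N[OF n0(1) x b] t1 unfolding y_def by linarith
    show ?thesis
    proof (cases "y \<le> n/2")
      case True
      have "2 * y / (n - y) \<le> 2 * y / (n/2)" using True y0 t1 by (intro divide_left_mono) auto
      then have k1: "kernel \<beta> (Suc k) x \<le> 4 * y / n" using kl by simp
      have "4 * y / n / n = 4 * x * (n powr \<beta> / (n * n))" unfolding y_def by simp
      also have "n powr \<beta> / (n * n) = n powr (-c-1)"
      proof -
        have e: "-c-1 = \<beta> - 2" by (simp add: c_def)
        have "n powr (2::real) = n * n" using n0 by (simp add: powr_numeral power2_eq_square)
        then show ?thesis unfolding e powr_diff by simp
      qed
      finally have e4: "4 * y / n / n = 4 * x * n powr (-c-1)" .
      have "kernel \<beta> (Suc k) x / n \<le> 4 * y / n / n" using k1 n0 by (intro divide_right_mono) auto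
      then have k2: "kernel \<beta> (Suc k) x / n \<le> 4 * x * n powr (-c-1)" using e4 by simp
      have hx: "2 * x \<le> n powr c" unfolding c_def using le_half[OF n0(1) x] True unfolding y_def by simp
      show ?thesis
      proof (cases k)
        case 0
        then have "n = 1" unfolding n_def by simp
        then have "kernel \<beta> (Suc k) x / n \<le> 2" using k2 hx by simp
        moreover have "\<psi> k - \<psi> (Suc k) \<ge> 2/c"
        proof -
          have x2: "x \<le> 1/2" using hx \<open>n = 1\<close> by simp
          have "\<psi> (Suc k) = 4/c * min 1 x" using 0 unfolding \<psi>_def by simp
          also have "\<dots> \<le> 4/c * (1/2)" using x2 c by (intro mult_left_mono) auto
          finally show ?thesis using 0 unfolding \<psi>_def by simp
        qed
        moreover have "2 \<le> 2/c" using c by (simp add: field_simps)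
        ultimately show ?thesis using Pd by linarith
      next
        case (Suc k')
        have kn: "real k = n - 1" unfolding n_def by simp
        have k1r: "1 < n" unfolding n_def using Suc by simp
        have "x * n powr (-c) \<le> 1/2" using hx n0 by (simp add: powr_minus field_simps)
        moreover have "x * real k powr (-c) \<le> 1"
        proof -
          have "1 \<le> real k" using Suc by simp
          then have "n / 2 \<le> real k" using kn by linarith
          then have "(n/2) powr c \<le> real k powr c" using c n0 by (intro powr_mono2) auto
          moreover have "(n/2) powr c = n powr c / 2 powr c" by (simp add: powr_divide)
          moreover have p2: "2 powr c \<le> 2"
          proof -
            have "(2::real) powr c \<le> 2 powr 1" using c by (intro powr_mono) auto
            then show ?thesis by simp
          qed
          moreover have "n powr c / 2 \<le> n powr c / 2 powr c" using c p2 by (intro divide_left_mono) auto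
          ultimately have "x \<le> real k powr c" using hx by linarith
          then show ?thesis using Suc by (simp add: powr_minus field_simps)
        qed
        ultimately have m1: "min 1 (x * n powr (-c)) = x * n powr (-c)"
          and m2: "min 1 (x * real k powr (-c)) = x * real k powr (-c)" by auto
        have "\<psi> (Suc k) = 4/c * (x * n powr (-c))" using m1 unfolding \<psi>_def nS by simp
        moreover have "\<psi> k = 4/c * (x * real k powr (-c))" using m2 Suc unfolding \<psi>_def by simp
        ultimately have "\<psi> k - \<psi> (Suc k) = 4/c * x * (real k powr (-c) - n powr (-c))"
          by (simp add: algebra_simps)
        also have "\<dots> \<ge> 4/c * x * (c * n powr (-c-1))"
          using neg_bern[OF k1r c(1)] kn c x by (intro mult_left_mono) auto
        finally have "\<psi> k - \<psi> (Suc k) \<ge> 4 * x * n powr (-c-1)" using c by simp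
        then show ?thesis using k2 Pd by linarith
      qed
    next
      case False
      have nL: "n < L" unfolding L_def using gt_half[OF n0(1) x b] False unfolding y_def by linarith
      have "2 * y / (n - y) \<le> 2 * n / (n - y)" using t1 False by (intro divide_right_mono) auto
      then have "kernel \<beta> (Suc k) x \<le> 2 * n / (n - y)" using kl by linarith
      then have "kernel \<beta> (Suc k) x / n \<le> 2 * n / (n - y) / n" using n0 by (intro divide_right_mono) auto
      then have k2: "kernel \<beta> (Suc k) x / n \<le> 2 / (n - y)" using n0 by simp
      have tc: "n - y \<ge> c * (n - N)" using key_bound[OF n0(1) x b] unfolding c_def N_def y_def by linarith
      show ?thesis
      proof (cases "real k \<le> N")
        case True
        have "min (real k) L - N \<le> 0" using True by linarith
        then have "max 0 (min (real k) L - N) = 0" by simp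
        then have f0: "\<Phi> k = 0" unfolding \<Phi>_def using True by simp
        have "\<Phi> (Suc k) \<ge> 1" unfolding \<Phi>_def using Nn nS by simp
        then have "8/c * 1 \<le> 8/c * (\<Phi> (Suc k) - \<Phi> k)" using c f0 by (intro mult_left_mono) auto
        moreover have "2 / (n - y) \<le> 2" using t1 by (simp add: field_simps)
        moreover have "2 \<le> 8 / c" using c by (simp add: field_simps)
        ultimately have "2 \<le> 8/c * (\<Phi> (Suc k) - \<Phi> k)" by simp
        then show ?thesis using k2 Qd \<open>2 / (n - y) \<le> 2\<close> by linarith
      next
        case False
        define a where "a = n - N"
        have a1: "1 < a" unfolding a_def using False unfolding n_def by simp
        have e1: "min n L = n" using nL by simp
        have e2: "max 0 (n - N) = n - N" using Nn by simp
        have "\<Phi> (Suc k) = ln (1 + a) + 1" unfolding \<Phi>_def a_def nS e1 e2 using Nn by simp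
        moreover have "\<Phi> k = ln a + 1"
        proof -
          have e3: "min (real k) L = n - 1" using nL n_def by simp
          have e4: "max 0 (n - 1 - N) = n - 1 - N" using False n_def by simp
          show ?thesis unfolding \<Phi>_def a_def e3 e4 using False by simp
        qed
        ultimately have "\<Phi> (Suc k) - \<Phi> k \<ge> 1 / (1 + a)" using ln_diff_ge[of a] a1 by simp
        then have p: "8/c * (\<Phi> (Suc k) - \<Phi> k) \<ge> 8/c * (1 / (1 + a))" using c by (intro mult_left_mono) auto
        have ca: "0 < c * a" using a1 c by simp
        have "2 / (n - y) \<le> 2 / (c * a)" using tc ca unfolding a_def by (intro divide_left_mono) auto
        also have "\<dots> \<le> 8/c * (1 / (1 + a))"
        proof -
          have "1/a \<le> 4 * (1/(1+a))" using a1 by (simp add: field_simps)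
          then have "2/c * (1/a) \<le> 2/c * (4 * (1/(1+a)))" using c by (intro mult_left_mono) auto
          then show ?thesis by simp
        qed
        finally show ?thesis using k2 p Qd by linarith
      qed
    qed
  qed
  then show ?thesis using nS by simp
qed




lemma lnL_bound:
  fixes x c :: real assumes "0 \<le> x" "0 < c" "c \<le> 1"
  shows "ln (1 + 2 powr (1/c) * x powr (1/c)) \<le> (2 + log_plus x) / c"
proof -
  have L: "2 powr (1/c) * x powr (1/c) = (2*x) powr (1/c)" using assms by (simp add: powr_mult)
  have lp0: "0 \<le> log_plus x" unfolding log_plus_def by auto
  have ln2: "ln (2::real) \<le> 1" using ln_le_minus_one[of 2] by simp
  show ?thesis
  proof (cases "2 * x \<le> 1")
    case True
    have "(2*x) powr (1/c) \<le> 1 powr (1/c)" using True assms by (intro powr_mono2) auto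
    then have "(2*x) powr (1/c) \<le> 1" by simp
    moreover have "0 < 1 + (2*x) powr (1/c)" by (simp add: add_pos_nonneg)
    ultimately have "ln (1 + (2*x) powr (1/c)) \<le> ln 2" by (intro ln_mono) auto
    also have "\<dots> \<le> 1" by fact
    also have "1 \<le> 2 / c" using assms by (simp add: field_simps)
    also have "2 / c \<le> (2 + log_plus x) / c" using lp0 assms by (intro divide_right_mono) auto
    finally show ?thesis using L by simp
  next
    case False
    have x0: "0 < x" using False by simp
    have g1: "1 \<le> (2*x) powr (1/c)" using False assms by (intro ge_one_powr_ge_zero) auto
    then have s1: "ln (1 + (2*x) powr (1/c)) \<le> ln (2 * (2*x) powr (1/c))" by (intro ln_mono) auto
    have s2: "ln (2 * (2*x) powr (1/c)) = ln 2 + (1/c) * (ln 2 + ln x)" using x0 by (simp add: ln_mult ln_powr)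
    have "ln x \<le> log_plus x" unfolding log_plus_def using x0 by auto
    then have "(1/c) * (ln 2 + ln x) \<le> (1/c) * (1 + log_plus x)" using ln2 assms
      by (intro mult_left_mono) auto
    then have s3: "ln 2 + (1/c) * (ln 2 + ln x) \<le> 1 + (1/c) * (1 + log_plus x)" using ln2 by linarith
    have "1 \<le> 1 / c" using assms by (simp add: field_simps)
    moreover have "(2 + log_plus x) / c = 1/c + (1/c) * (1 + log_plus x)" using assms by (simp add: field_simps)
    ultimately have "1 + (1/c) * (1 + log_plus x) \<le> (2 + log_plus x) / c" by linarith
    then show ?thesis using L s1 s2 s3 by simp
  qed
qed

lemma partb_point:
  fixes x \<beta> :: real assumes x: "0 \<le> x" and b: "0 \<le> \<beta>" "\<beta> < 1"
  shows "(\<Sum>k<K. kernel \<beta> (Suc k) x / real (Suc k))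
     \<le> 4/(1-\<beta>) + 24/(1-\<beta>)^2 + 8/(1-\<beta>)^2 * log_plus x"
proof -
  define c where "c = 1 - \<beta>"
  define N where "N = x powr (1/(1-\<beta>))"
  define L where "L = 2 powr (1/(1-\<beta>)) * x powr (1/(1-\<beta>))"
  define \<psi> where "\<psi> = (\<lambda>m::nat. if m = 0 then 4/c else 4/c * min 1 (x * real m powr (-c)))"
  define \<Phi> where "\<Phi> = (\<lambda>m::nat. ln (1 + max 0 (min (real m) L - N)) + (if real m > N then 1 else 0))"
  have c: "0 < c" "c \<le> 1" using b unfolding c_def by auto
  have T: "kernel \<beta> (Suc k) x / real (Suc k) \<le> (\<psi> k - \<psi> (Suc k)) + 8/c * (\<Phi> (Suc k) - \<Phi> k)" for k
    using partb_term[OF x b, of k] unfolding \<psi>_def \<Phi>_def c_def N_def L_def by simp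
  have "(\<Sum>k<K. kernel \<beta> (Suc k) x / real (Suc k)) \<le> (\<Sum>k<K. (\<psi> k - \<psi> (Suc k)) + 8/c * (\<Phi> (Suc k) - \<Phi> k))"
    by (intro sum_mono T)
  also have "\<dots> = (\<psi> 0 - \<psi> K) + 8/c * (\<Phi> K - \<Phi> 0)"
  proof -
    have "(\<Sum>k<K. 8/c * (\<Phi> (Suc k) - \<Phi> k)) = 8/c * (\<Sum>k<K. \<Phi> (Suc k) - \<Phi> k)"
      by (rule sum_distrib_left[symmetric])
    also have "\<dots> = 8/c * (\<Phi> K - \<Phi> 0)" by (simp only: sum_lessThan_telescope)
    finally show ?thesis by (simp add: sum.distrib sum_lessThan_telescope')
  qed
  also have "\<dots> \<le> 4/c + 8/c * (1 + (2 + log_plus x)/c)"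
  proof -
    have "\<psi> K \<ge> 0" unfolding \<psi>_def using c x by auto
    moreover have "\<psi> 0 = 4/c" unfolding \<psi>_def by simp
    moreover have "\<Phi> 0 \<ge> 0" unfolding \<Phi>_def by auto
    moreover have "\<Phi> K \<le> 1 + (2 + log_plus x)/c"
    proof -
      have N0: "0 \<le> N" unfolding N_def by simp
      have L0: "0 \<le> L" unfolding L_def by simp
      have "max 0 (min (real K) L - N) \<le> L" using N0 L0 by simp
      then have "ln (1 + max 0 (min (real K) L - N)) \<le> ln (1 + L)" by (intro ln_mono) auto
      also have "\<dots> \<le> (2 + log_plus x)/c" unfolding L_def c_def using lnL_bound[OF x, of "1-\<beta>"] b by simp
      moreover have "0 \<le> log_plus x" unfolding log_plus_def by auto
      then have "0 \<le> (2 + log_plus x)/c" using c by simp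
      ultimately show ?thesis unfolding \<Phi>_def by auto
    qed
    ultimately have "\<Phi> K - \<Phi> 0 \<le> 1 + (2 + log_plus x)/c" "\<psi> 0 - \<psi> K \<le> 4/c" by auto
    then have "8/c * (\<Phi> K - \<Phi> 0) \<le> 8/c * (1 + (2 + log_plus x)/c)" using c by (intro mult_left_mono) auto
    then show ?thesis using \<open>\<psi> 0 - \<psi> K \<le> 4/c\<close> by linarith
  qed
  also have "\<dots> \<le> 4/c + 24/c^2 + 8/c^2 * log_plus x"
  proof -
    have "8/c \<le> 8/c^2" using c by (simp add: field_simps power2_eq_square)
    moreover have "8/c * (1 + (2 + log_plus x)/c) = 8/c + 16/c^2 + 8/c^2 * log_plus x"
      using c by (simp add: field_simps power2_eq_square)
    ultimately show ?thesis by linarith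
  qed
  finally show ?thesis unfolding c_def .
qed




lemma parta_point:
  fixes x \<beta> :: real and n :: nat
  assumes x: "0 \<le> x" and b: "0 \<le> \<beta>" "\<beta> < 1" and n1: "1 \<le> n"
  shows "kernel \<beta> n x \<le> min 2 (4 * x * real n powr (\<beta> - 1)) +
    (\<Sum>j<n. if \<lceil>x powr (1/(1-\<beta>))\<rceil> = int (n - j) \<and> real n < 2 powr (1/(1-\<beta>)) * real (n - j)
             then 4 * real n / (1-\<beta>) / (real j + 1) else 0)"
  (is "_ \<le> ?m + ?S")
proof -
  define c where "c = 1 - \<beta>"
  have c: "0 < c" "c \<le> 1" using b unfolding c_def by auto
  define rn where "rn = real n"
  have rn: "0 < rn" "1 \<le> rn" using n1 unfolding rn_def by auto
  define y where "y = rn powr \<beta> * x"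
  have y0: "0 \<le> y" unfolding y_def using x by simp
  define N where "N = x powr (1/(1-\<beta>))"
  have S0: "0 \<le> ?S" using c unfolding c_def by (intro sum_nonneg) auto
  have m0: "0 \<le> ?m" using x by simp
  show ?thesis
  proof (cases "1 \<le> rn - y")
    case False
    then have "kernel \<beta> n x = 0" unfolding rn_def y_def by (intro kernel_zero) simp
    then show ?thesis using S0 m0 by simp
  next
    case t1: True
    have kl: "kernel \<beta> n x \<le> 2 * y / (rn - y)" "kernel \<beta> n x \<le> y"
      using kernel_le[OF x, of n \<beta>] t1 unfolding rn_def y_def by auto
    have Nn: "N < rn" unfolding N_def using lt_N[OF rn(1) x b] t1 unfolding y_def by linarith
    show ?thesis
    proof (cases "y \<le> rn/2")
      case True
      have "2 * y / (rn - y) \<le> 2 * y / (rn/2)" using True y0 t1 by (intro divide_left_mono) auto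
      then have k1: "kernel \<beta> n x \<le> 4 * y / rn" using kl by simp
      have "4 * y / rn = 4 * x * (rn powr \<beta> / rn)" unfolding y_def by simp
      also have "rn powr \<beta> / rn = rn powr (\<beta> - 1)" using rn by (simp add: powr_diff)
      finally have k1': "kernel \<beta> n x \<le> 4 * x * real n powr (\<beta> - 1)" using k1 unfolding rn_def by simp
      have "2 * y / (rn - y) \<le> 2" using True t1 y0 by (simp add: field_simps)
      then have "kernel \<beta> n x \<le> ?m" using k1' kl by simp
      then show ?thesis using S0 by linarith
    next
      case False
      have nA: "rn < 2 powr (1/(1-\<beta>)) * N" unfolding N_def using gt_half[OF rn(1) x b] False
        unfolding y_def by linarith
      have tc: "rn - y \<ge> c * (rn - N)" using key_bound[OF rn(1) x b] unfolding c_def N_def y_def by linarith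
      have N0: "0 < N"
      proof (rule ccontr)
        assume "\<not> 0 < N"
        then have "2 powr (1/(1-\<beta>)) * N \<le> 0" by (simp add: mult_nonneg_nonpos)
        then show False using nA rn by linarith
      qed
      define m where "m = nat \<lceil>N\<rceil>"
      have mN: "real m \<ge> N" unfolding m_def using N0 by linarith
      have m1: "1 \<le> m" unfolding m_def using N0 by linarith
      have mn: "m \<le> n" unfolding m_def using Nn unfolding rn_def by linarith
      define j where "j = n - m"
      have jn: "j < n" unfolding j_def using m1 mn by simp
      have nj: "n - j = m" unfolding j_def using mn by simp
      have cm: "\<lceil>x powr (1/(1-\<beta>))\<rceil> = int (n - j)" unfolding nj m_def N_def[symmetric] using N0 by linarith
      have Am: "real n < 2 powr (1/(1-\<beta>)) * real (n - j)" unfolding nj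
        using nA mN unfolding rn_def by (smt (verit) mult_left_mono powr_ge_zero)
      have "(if \<lceil>x powr (1/(1-\<beta>))\<rceil> = int (n - j) \<and> real n < 2 powr (1/(1-\<beta>)) * real (n - j)
             then 4 * real n / (1-\<beta>) / (real j + 1) else 0) \<le> ?S"
        (is "?I \<le> _") using jn c unfolding c_def by (intro member_le_sum) auto
      moreover have "?I = 4 * real n / (1-\<beta>) / (real j + 1)"
        by (rule if_P) (use cm Am in blast)
      ultimately have Sj: "4 * rn / c / (real j + 1) \<le> ?S" unfolding c_def rn_def by linarith
      have "kernel \<beta> n x \<le> 4 * rn / c / (real j + 1)"
      proof (cases "j = 0")
        case True
        have "rn \<le> 4 * rn / c" using c rn by (simp add: field_simps)
        then show ?thesis using True kl t1 by simp
      next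
        case False
        have jr: "real j = rn - real m" unfolding j_def rn_def using mn by simp
        have cj: "0 < c * real j" using c False by simp
        have "c * real j \<le> rn - y" using tc mN jr c by (smt (verit) mult_left_mono)
        then have "2 * rn / (rn - y) \<le> 2 * rn / (c * real j)" using rn cj by (intro divide_left_mono) auto
        moreover have "2 * y / (rn - y) \<le> 2 * rn / (rn - y)" using t1 y0 by (intro divide_right_mono) auto
        moreover have "2 * rn / (c * real j) \<le> 4 * rn / c / (real j + 1)"
        proof -
          have "1 / real j \<le> 2 / (real j + 1)" using False by (simp add: field_simps)
          then have "(2 * rn / c) * (1 / real j) \<le> (2 * rn / c) * (2 / (real j + 1))"
            using c rn by (intro mult_left_mono) auto
          then show ?thesis by simp
        qed
        ultimately show ?thesis using kl by linarith
      qed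
      then show ?thesis using Sj m0 by linarith
    qed
  qed
qed




lemma set_meas:
  fixes \<xi> :: "'a \<Rightarrow> real"
  assumes "\<xi> \<in> borel_measurable M"
  shows "{x\<in>space M. \<lceil>\<xi> x powr e\<rceil> = (k::int)} \<in> sets M"
proof -
  have h: "(\<lambda>x. \<lceil>\<xi> x powr e\<rceil>) \<in> M \<rightarrow>\<^sub>M count_space UNIV"
  proof -
    have p: "(\<lambda>x. \<xi> x powr e) \<in> borel_measurable M" using powr_real_measurable[of \<xi> M "\<lambda>x. e"] assms by simp
    show ?thesis using measurable_compose[OF p measurable_real_ceiling] .
  qed
  have "(\<lambda>x. \<lceil>\<xi> x powr e\<rceil>) -` {k} \<inter> space M \<in> sets M" by (rule measurable_sets[OF h]) simp
  moreover have "(\<lambda>x. \<lceil>\<xi> x powr e\<rceil>) -` {k} \<inter> space M = {x\<in>space M. \<lceil>\<xi> x powr e\<rceil> = k}" by auto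
  ultimately show ?thesis by simp
qed

lemma int_term:
  fixes M :: "'a measure" and \<xi> :: "'a \<Rightarrow> real"
  assumes P: "prob_space M" and m: "\<xi> \<in> borel_measurable M"
  shows "integrable M (\<lambda>x. if \<lceil>\<xi> x powr e\<rceil> = int k \<and> Q then T else 0)"
    "integral\<^sup>L M (\<lambda>x. if \<lceil>\<xi> x powr e\<rceil> = int k \<and> Q then T else (0::real)) =
       (if Q then T * measure M {x\<in>space M. \<lceil>\<xi> x powr e\<rceil> = int k} else 0)"
proof -
  interpret prob_space M by (rule P)
  define S where "S = {x\<in>space M. \<lceil>\<xi> x powr e\<rceil> = int k}"
  have S: "S \<in> sets M" unfolding S_def by (rule set_meas[OF m])
  have eq: "\<And>x. x \<in> space M \<Longrightarrow> (if \<lceil>\<xi> x powr e\<rceil> = int k \<and> Q then T else 0) = (if Q then T else 0) * indicator S x"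
    unfolding S_def by (auto simp: indicator_def)
  have i1: "integrable M (\<lambda>x. (if Q then T else 0) * indicator S x)"
  proof -
    have "emeasure M S < \<infinity>" by (simp add: emeasure_eq_measure)
    then show ?thesis using S by (intro integrable_mult_right integrable_real_indicator) auto
  qed
  then show "integrable M (\<lambda>x. if \<lceil>\<xi> x powr e\<rceil> = int k \<and> Q then T else 0)"
  proof -
    have "integrable M (\<lambda>x. if \<lceil>\<xi> x powr e\<rceil> = int k \<and> Q then T else 0) \<longleftrightarrow>
          integrable M (\<lambda>x. (if Q then T else 0) * indicator S x)"
      by (rule Bochner_Integration.integrable_cong) (auto simp: eq)
    then show ?thesis using i1 by simp
  qed
  have "integral\<^sup>L M (\<lambda>x. if \<lceil>\<xi> x powr e\<rceil> = int k \<and> Q then T else (0::real)) =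
      integral\<^sup>L M (\<lambda>x. (if Q then T else 0) * indicator S x)"
    by (intro Bochner_Integration.integral_cong) (auto simp: eq)
  also have "\<dots> = (if Q then T else 0) * measure M S"
    using S sets.sets_into_space[OF S] by (simp add: Int_absorb2)
  finally show "integral\<^sup>L M (\<lambda>x. if \<lceil>\<xi> x powr e\<rceil> = int k \<and> Q then T else (0::real)) =
       (if Q then T * measure M {x\<in>space M. \<lceil>\<xi> x powr e\<rceil> = int k} else 0)"
    unfolding S_def by simp
qed

lemma kernel_integrable:
  fixes M :: "'a measure" and \<xi> :: "'a \<Rightarrow> real"
  assumes P: "prob_space M" and m: "\<xi> \<in> borel_measurable M" and nn: "\<And>x. x \<in> space M \<Longrightarrow> \<xi> x \<ge> 0"
  shows "(\<lambda>x. kernel \<beta> n (\<xi> x)) \<in> borel_measurable M" "integrable M (\<lambda>x. kernel \<beta> n (\<xi> x))"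
proof -
  interpret prob_space M by (rule P)
  show ms: "(\<lambda>x. kernel \<beta> n (\<xi> x)) \<in> borel_measurable M"
    using measurable_compose[OF m kernel_meas] .
  show "integrable M (\<lambda>x. kernel \<beta> n (\<xi> x))"
    using ms nn kernel_nonneg kernel_le_n by (intro integrable_const_bound[where B="real n"]) auto
qed




lemma part_b:
  fixes M :: "'a measure" and \<xi> :: "'a \<Rightarrow> real" and \<beta> :: real
  assumes P: "prob_space M" and m: "\<xi> \<in> borel_measurable M"
    and nn: "\<And>x. x \<in> space M \<Longrightarrow> \<xi> x \<ge> 0"
    and b: "0 \<le> \<beta>" "\<beta> < 1"
    and I: "integrable M (\<lambda>x. log_plus (\<xi> x))"
  shows "summable (\<lambda>n::nat. (1 / real (Suc n)) * integral\<^sup>L M (\<lambda>x. kernel \<beta> (Suc n) (\<xi> x)))"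
proof -
  interpret prob_space M by (rule P)
  define B where "B = (\<lambda>x. 4/(1-\<beta>) + 24/(1-\<beta>)^2 + 8/(1-\<beta>)^2 * log_plus x)"
  have iB: "integrable M (\<lambda>x. B (\<xi> x))" unfolding B_def using I
    by (intro Bochner_Integration.integrable_add Bochner_Integration.integrable_mult_right) auto
  have ik: "integrable M (\<lambda>x. kernel \<beta> n (\<xi> x))" for n
    using kernel_integrable[OF P m nn] by blast
  show ?thesis
  proof (rule summableI_nonneg_bounded[where x = "integral\<^sup>L M (\<lambda>x. B (\<xi> x))"])
    fix n
    show "0 \<le> (1 / real (Suc n)) * integral\<^sup>L M (\<lambda>x. kernel \<beta> (Suc n) (\<xi> x))"
      using nn kernel_nonneg by (intro mult_nonneg_nonneg Bochner_Integration.integral_nonneg) auto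
  next
    fix K
    have "(\<Sum>i<K. (1 / real (Suc i)) * integral\<^sup>L M (\<lambda>x. kernel \<beta> (Suc i) (\<xi> x)))
        = (\<Sum>i<K. integral\<^sup>L M (\<lambda>x. kernel \<beta> (Suc i) (\<xi> x) / real (Suc i)))"
      by simp
    also have "\<dots> = integral\<^sup>L M (\<lambda>x. \<Sum>i<K. kernel \<beta> (Suc i) (\<xi> x) / real (Suc i))"
      using ik by (intro Bochner_Integration.integral_sum[symmetric] integrable_divide_zero) auto
    also have "\<dots> \<le> integral\<^sup>L M (\<lambda>x. B (\<xi> x))"
      using ik iB nn partb_point[OF _ b] unfolding B_def
      by (intro integral_mono Bochner_Integration.integrable_sum integrable_divide_zero) auto
    finally show "(\<Sum>i<K. (1 / real (Suc i)) * integral\<^sup>L M (\<lambda>x. kernel \<beta> (Suc i) (\<xi> x)))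
        \<le> integral\<^sup>L M (\<lambda>x. B (\<xi> x))" .
  qed
qed




lemma D_lim:
  fixes M :: "'a measure" and \<xi> :: "'a \<Rightarrow> real" and \<beta> :: real
  assumes P: "prob_space M" and m: "\<xi> \<in> borel_measurable M"
    and nn: "\<And>x. x \<in> space M \<Longrightarrow> \<xi> x \<ge> 0" and b: "\<beta> < 1"
  shows "(\<lambda>n::nat. integral\<^sup>L M (\<lambda>x. min 2 (4 * \<xi> x * real n powr (\<beta> - 1)))) \<longlonglongrightarrow> 0"
proof -
  interpret prob_space M by (rule P)
  note [measurable] = m
  have "(\<lambda>n::nat. integral\<^sup>L M (\<lambda>x. min 2 (4 * \<xi> x * real n powr (\<beta> - 1)))) \<longlonglongrightarrow> integral\<^sup>L M (\<lambda>x. 0::real)"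
  proof (rule integral_dominated_convergence[where w = "\<lambda>x. 2"])
    show "(\<lambda>x. 0::real) \<in> borel_measurable M" by simp
    show "\<And>n::nat. (\<lambda>x. min 2 (4 * \<xi> x * real n powr (\<beta> - 1))) \<in> borel_measurable M" by measurable
    show "integrable M (\<lambda>x. 2::real)" by simp
    show "AE x in M. (\<lambda>n::nat. min 2 (4 * \<xi> x * real n powr (\<beta> - 1))) \<longlonglongrightarrow> 0"
    proof (rule AE_I2)
      fix x
      have "(\<lambda>n::nat. real n powr (\<beta> - 1)) \<longlonglongrightarrow> 0"
        using b by (intro tendsto_neg_powr filterlim_real_sequentially) auto
      then have "(\<lambda>n::nat. 4 * \<xi> x * real n powr (\<beta> - 1)) \<longlonglongrightarrow> 0"
        by (rule tendsto_mult_right_zero)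
      then have "(\<lambda>n::nat. min 2 (4 * \<xi> x * real n powr (\<beta> - 1))) \<longlonglongrightarrow> min 2 0"
        by (intro tendsto_min tendsto_const)
      then show "(\<lambda>n::nat. min 2 (4 * \<xi> x * real n powr (\<beta> - 1))) \<longlonglongrightarrow> 0" by simp
    qed
    show "\<And>n::nat. AE x in M. norm (min 2 (4 * \<xi> x * real n powr (\<beta> - 1))) \<le> 2"
      using nn by (intro AE_I2) auto
  qed
  then show ?thesis by simp
qed

lemma S_lim:
  fixes P :: "nat \<Rightarrow> real" and A c :: real
  assumes A: "1 \<le> A" and c: "0 < c" and Pnn: "\<And>m. 0 \<le> P m"
    and H: "(\<lambda>n::nat. real n * ln (real n) * P n) \<longlonglongrightarrow> 0"
  shows "(\<lambda>n::nat. \<Sum>j<n. if real n < A * real (n - j) then 4 * real n / c / (real j + 1) * P (n - j) else 0) \<longlonglongrightarrow> 0"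
proof (rule LIMSEQ_I)
  fix r :: real assume r: "0 < r"
  define \<epsilon> where "\<epsilon> = r * c / (32 * A)"
  have e: "0 < \<epsilon>" unfolding \<epsilon>_def using r c A by simp
  obtain M0 where M0: "\<And>m. m \<ge> M0 \<Longrightarrow> norm (real m * ln (real m) * P m - 0) < \<epsilon>"
    using LIMSEQ_D[OF H e] by blast
  define n1 where "n1 = nat \<lceil>A * (real M0 + 3) + A * A + 3\<rceil>"
  show "\<exists>no. \<forall>n\<ge>no. norm ((\<Sum>j<n. if real n < A * real (n - j) then 4 * real n / c / (real j + 1) * P (n - j) else 0) - 0) < r"
  proof (intro exI allI impI)
    fix n assume nn1: "n1 \<le> n"
    define rn where "rn = real n"
    have rnb: "A * (real M0 + 3) + A * A + 3 \<le> rn" unfolding rn_def using nn1 unfolding n1_def by linarith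
    have AA: "0 \<le> A * (real M0 + 3)" "0 \<le> A * A" using A by auto
    have rn3: "3 \<le> rn" and rnAA: "A * A \<le> rn" and rnM: "A * (real M0 + 3) \<le> rn" using rnb AA by linarith+
    have rn0: "0 < rn" using rn3 by simp
    have lnn: "1 \<le> ln rn"
    proof -
      have "ln (exp 1) \<le> ln rn" using exp_le rn3 by (intro ln_mono) auto
      then show ?thesis by simp
    qed
    have lnA: "ln rn / 2 \<le> ln (rn / A)"
    proof -
      have "ln (A * A) \<le> ln rn" using rnAA A by (intro ln_mono) auto
      then have "2 * ln A \<le> ln rn" using A by (simp add: ln_mult)
      then show ?thesis using A rn0 by (simp add: ln_div)
    qed
    define K where "K = 8 * \<epsilon> * A / (c * ln rn)"
    have K0: "0 \<le> K" unfolding K_def using e A c lnn by simp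
    have trm: "(if real n < A * real (n - j) then 4 * real n / c / (real j + 1) * P (n - j) else 0)
        \<le> K * (1 / (real j + 1))" if "j < n" for j
    proof (cases "real n < A * real (n - j)")
      case False then show ?thesis using K0 by simp
    next
      case True
      define m where "m = n - j"
      have "rn < A * real m" using True unfolding m_def rn_def .
      then have mA: "rn / A < real m" using A by (simp add: pos_divide_less_eq mult.commute)
      have "real M0 + 3 \<le> rn / A" using rnM A by (simp add: field_simps)
      then have m3: "real M0 + 3 < real m" using mA by linarith
      then have mM0: "M0 \<le> m" by linarith
      have rA3: "3 \<le> rn / A" using \<open>real M0 + 3 \<le> rn / A\<close> by simp
      have lnrA: "0 < ln (rn / A)" using lnA lnn by linarith
      have "(rn / A) * ln (rn / A) \<le> real m * ln (real m)"
        using mA rA3 lnrA by (intro mult_mono ln_mono) auto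
      moreover have "(rn / A) * (ln rn / 2) \<le> (rn / A) * ln (rn / A)"
        using lnA rA3 by (intro mult_left_mono) auto
      ultimately have mlb: "(rn / A) * (ln rn / 2) \<le> real m * ln (real m)" by linarith
      have lbpos: "0 < (rn / A) * (ln rn / 2)" using rA3 lnn by (intro mult_pos_pos) auto
      have "real m * ln (real m) * P m < \<epsilon>" using M0[OF mM0] Pnn by simp
      moreover have "(rn / A) * (ln rn / 2) * P m \<le> real m * ln (real m) * P m"
        using mlb Pnn by (intro mult_right_mono) auto
      ultimately have "(rn / A) * (ln rn / 2) * P m \<le> \<epsilon>" by linarith
      then have "P m * ((rn / A) * (ln rn / 2)) \<le> \<epsilon>" by (simp only: mult.commute)
      then have Pm: "P m \<le> \<epsilon> / ((rn / A) * (ln rn / 2))" using pos_le_divide_eq[OF lbpos] by blast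
      have "4 * rn / c / (real j + 1) * P m \<le> 4 * rn / c / (real j + 1) * (\<epsilon> / ((rn / A) * (ln rn / 2)))"
        using Pm c rn0 by (intro mult_left_mono) auto
      also have "\<dots> = K * (1 / (real j + 1))"
        unfolding K_def using rn0 c A lnn by (simp add: field_simps)
      finally have fin: "4 * real n / c / (real j + 1) * P (n - j) \<le> K * (1 / (real j + 1))"
        unfolding m_def rn_def .
      show ?thesis using fin by (simp only: if_P[OF True])
    qed
    have S0: "0 \<le> (\<Sum>j<n. if real n < A * real (n - j) then 4 * real n / c / (real j + 1) * P (n - j) else 0)"
      using Pnn c by (intro sum_nonneg) auto
    have "(\<Sum>j<n. if real n < A * real (n - j) then 4 * real n / c / (real j + 1) * P (n - j) else 0)
        \<le> (\<Sum>j<n. K * (1 / (real j + 1)))" by (intro sum_mono trm) auto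
    also have "\<dots> = K * (\<Sum>j<n. 1 / (real j + 1))" by (simp add: sum_distrib_left)
    also have "\<dots> \<le> K * (1 + ln rn)"
      using harm_bound[of n] rn3 K0 unfolding rn_def by (intro mult_left_mono) auto
    also have "\<dots> \<le> 16 * \<epsilon> * A / c"
    proof -
      have "(1 + ln rn) / ln rn \<le> 2" using lnn by (simp add: field_simps)
      then have "8 * \<epsilon> * A / c * ((1 + ln rn) / ln rn) \<le> 8 * \<epsilon> * A / c * 2"
        using e A c by (intro mult_left_mono) auto
      then show ?thesis unfolding K_def by (simp add: field_simps)
    qed
    also have "\<dots> < r" unfolding \<epsilon>_def using r c A by (simp add: field_simps)
    finally show "norm ((\<Sum>j<n. if real n < A * real (n - j) then 4 * real n / c / (real j + 1) * P (n - j) else 0) - 0) < r"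
      using S0 by simp
  qed
qed




theorem mainTheorem6:
  fixes M :: "'a measure" and \<xi> :: "'a \<Rightarrow> real" and \<beta> :: real
  assumes "prob_space M"
    and "\<xi> \<in> borel_measurable M"
    and "\<And>x. x \<in> space M \<Longrightarrow> \<xi> x \<ge> 0"
    and "0 \<le> \<beta>" and "\<beta> < 1"
  shows
    "(((\<lambda>n::nat. real n * ln (real n) *
         measure M {x \<in> space M. \<lceil>\<xi> x powr (1 / (1 - \<beta>))\<rceil> = int n}) \<longlonglongrightarrow> 0)
       \<longrightarrow> ((\<lambda>n::nat. integral\<^sup>L M (\<lambda>x. kernel \<beta> n (\<xi> x))) \<longlonglongrightarrow> 0))
     \<and> (integrable M (\<lambda>x. log_plus (\<xi> x))
       \<longrightarrow> summable (\<lambda>n::nat. (1 / real (Suc n)) * integral\<^sup>L M (\<lambda>x. kernel \<beta> (Suc n) (\<xi> x))))"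
proof -
  note P = assms(1) and m = assms(2) and nn = assms(3) and b = assms(4,5)
  interpret prob_space M by (rule P)
  note [measurable] = m
  have pb: "integrable M (\<lambda>x. log_plus (\<xi> x))
       \<longrightarrow> summable (\<lambda>n::nat. (1 / real (Suc n)) * integral\<^sup>L M (\<lambda>x. kernel \<beta> (Suc n) (\<xi> x)))"
    using part_b[OF P m nn b] by blast
  have pa: "((\<lambda>n::nat. real n * ln (real n) *
         measure M {x \<in> space M. \<lceil>\<xi> x powr (1 / (1 - \<beta>))\<rceil> = int n}) \<longlonglongrightarrow> 0)
       \<longrightarrow> ((\<lambda>n::nat. integral\<^sup>L M (\<lambda>x. kernel \<beta> n (\<xi> x))) \<longlonglongrightarrow> 0)"
  proof
    define Pm where "Pm = (\<lambda>k::nat. measure M {x \<in> space M. \<lceil>\<xi> x powr (1 / (1 - \<beta>))\<rceil> = int k})"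
    assume H0: "(\<lambda>n::nat. real n * ln (real n) *
         measure M {x \<in> space M. \<lceil>\<xi> x powr (1 / (1 - \<beta>))\<rceil> = int n}) \<longlonglongrightarrow> 0"
    then have H: "(\<lambda>n::nat. real n * ln (real n) * Pm n) \<longlonglongrightarrow> 0" unfolding Pm_def .
    define A where "A = (2::real) powr (1 / (1 - \<beta>))"
    have A1: "1 \<le> A" unfolding A_def using b by (intro ge_one_powr_ge_zero) auto
    have c: "0 < 1 - \<beta>" using b by simp
    define D where "D = (\<lambda>n::nat. integral\<^sup>L M (\<lambda>x. min 2 (4 * \<xi> x * real n powr (\<beta> - 1))))"
    define S where "S = (\<lambda>n::nat. \<Sum>j<n. if real n < A * real (n - j) then 4 * real n / (1 - \<beta>) / (real j + 1) * Pm (n - j) else 0)"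
    have Dl: "D \<longlonglongrightarrow> 0" unfolding D_def using D_lim[OF P m nn b(2)] .
    have Sl: "S \<longlonglongrightarrow> 0" unfolding S_def using S_lim[OF A1 c _ H] by (simp add: Pm_def)
    have DSl: "(\<lambda>n. D n + S n) \<longlonglongrightarrow> 0" using tendsto_add[OF Dl Sl] by simp
    have le: "integral\<^sup>L M (\<lambda>x. kernel \<beta> n (\<xi> x)) \<le> D n + S n" if n1: "1 \<le> n" for n
    proof -
      let ?T = "\<lambda>j. 4 * real n / (1 - \<beta>) / (real j + 1)"
      let ?Q = "\<lambda>j. real n < 2 powr (1 / (1 - \<beta>)) * real (n - j)"
      let ?f = "\<lambda>j x. if \<lceil>\<xi> x powr (1/(1-\<beta>))\<rceil> = int (n - j) \<and> ?Q j then ?T j else 0"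
      have iD: "integrable M (\<lambda>x. min 2 (4 * \<xi> x * real n powr (\<beta> - 1)))"
        using nn by (intro integrable_const_bound[where B=2]) (auto intro!: AE_I2)
      have ifj: "integrable M (?f j)" for j by (rule int_term(1)[OF P m])
      have isum: "integrable M (\<lambda>x. \<Sum>j<n. ?f j x)"
        by (rule Bochner_Integration.integrable_sum) (rule ifj)
      have "integral\<^sup>L M (\<lambda>x. kernel \<beta> n (\<xi> x))
          \<le> integral\<^sup>L M (\<lambda>x. min 2 (4 * \<xi> x * real n powr (\<beta> - 1)) + (\<Sum>j<n. ?f j x))"
      proof (rule integral_mono)
        show "integrable M (\<lambda>x. kernel \<beta> n (\<xi> x))" using kernel_integrable[OF P m nn] by blast
        show "integrable M (\<lambda>x. min 2 (4 * \<xi> x * real n powr (\<beta> - 1)) + (\<Sum>j<n. ?f j x))"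
          by (rule Bochner_Integration.integrable_add[OF iD isum])
        fix x assume "x \<in> space M"
        show "kernel \<beta> n (\<xi> x) \<le> min 2 (4 * \<xi> x * real n powr (\<beta> - 1)) + (\<Sum>j<n. ?f j x)"
          by (rule parta_point[OF nn[OF \<open>x \<in> space M\<close>] b n1])
      qed
      also have "\<dots> = D n + (\<Sum>j<n. integral\<^sup>L M (?f j))"
      proof -
        have "integral\<^sup>L M (\<lambda>x. \<Sum>j<n. ?f j x) = (\<Sum>j<n. integral\<^sup>L M (?f j))"
          by (rule Bochner_Integration.integral_sum) (rule ifj)
        then show ?thesis unfolding D_def Bochner_Integration.integral_add[OF iD isum] by (rule arg_cong)
      qed
      also have "(\<Sum>j<n. integral\<^sup>L M (?f j)) = S n"
        unfolding S_def
      proof (rule sum.cong[OF refl])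
        fix j
        show "integral\<^sup>L M (?f j) = (if real n < A * real (n - j) then 4 * real n / (1 - \<beta>) / (real j + 1) * Pm (n - j) else 0)"
          by (simp only: int_term(2)[OF P m] Pm_def A_def)
      qed
      finally show ?thesis .
    qed
    have E0: "0 \<le> integral\<^sup>L M (\<lambda>x. kernel \<beta> n (\<xi> x))" for n
      using nn kernel_nonneg by (intro Bochner_Integration.integral_nonneg) auto
    show "(\<lambda>n::nat. integral\<^sup>L M (\<lambda>x. kernel \<beta> n (\<xi> x))) \<longlonglongrightarrow> 0"
    proof (rule tendsto_sandwich[OF _ _ tendsto_const DSl])
      show "\<forall>\<^sub>F n in sequentially. 0 \<le> integral\<^sup>L M (\<lambda>x. kernel \<beta> n (\<xi> x))" using E0 by simp
      show "\<forall>\<^sub>F n in sequentially. integral\<^sup>L M (\<lambda>x. kernel \<beta> n (\<xi> x)) \<le> D n + S n"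
        using le by (intro eventually_sequentiallyI[of 1]) auto
    qed
  qed
  show ?thesis using pa pb by blast
qed

end
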